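(* A sequence is the detour sequence of a complete multipartite graph if and only if it has one of the following two forms: (1) $(N)_N$, where $N$ is a positive integer; (2) $(2n)_n,\ (2n+1)_m$, where $m,n$ are positive integers with $m>n$.
   Context: All graphs are finite and simple. A complete multipartite graph $K(n_1,\ldots,n_p)$ ($p\ge 2$, parts of sizes $n_i\ge 0$) has its vertex set partitioned into independent sets of sizes $n_1,\ldots,n_p$, with two vertices adjacent if and only if they lie in different parts. The order of a path is its number of vertices. For a vertex $v$, $\tau(v)$ is the order of a longest path having $v$ as an endvertex; the detour sequence is the nondecreasing sequence of the values $\tau(v)$ over all vertices. The notation $(n)_k$ denotes the integer $n$ repeated $k$ times consecutively. *)

theory Defs
  imports "HOL-Library.Multiset"
begin

definition is_path :: "'a set \<Rightarrow> ('a \<Rightarrow> 'a \<Rightarrow> bool) \<Rightarrow> 'a list \<Rightarrow> bool" where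
  "is_path V E p \<longleftrightarrow> p \<noteq> [] \<and> distinct p \<and> set p \<subseteq> V \<and>
     (\<forall>i. Suc i < length p \<longrightarrow> E (p ! i) (p ! Suc i))"

definition detour :: "'a set \<Rightarrow> ('a \<Rightarrow> 'a \<Rightarrow> bool) \<Rightarrow> 'a \<Rightarrow> nat" where
  "detour V E v = Max {length p | p. is_path V E p \<and> (hd p = v \<or> last p = v)}"

definition detour_seq :: "'a set \<Rightarrow> ('a \<Rightarrow> 'a \<Rightarrow> bool) \<Rightarrow> nat list" where
  "detour_seq V E = sorted_list_of_multiset (image_mset (detour V E) (mset_set V))"

definition connected_graph :: "'a set \<Rightarrow> ('a \<Rightarrow> 'a \<Rightarrow> bool) \<Rightarrow> bool" where
  "connected_graph V E \<longleftrightarrow> V \<noteq> {} \<and>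
     (\<forall>u\<in>V. \<forall>v\<in>V. \<exists>p. is_path V E p \<and> hd p = u \<and> last p = v)"

text \<open>The complete multipartite graph K(n_1,...,n_p) for ns = [n_1,...,n_p]:
vertex (i,j) is the j-th vertex of part i; adjacency iff different parts.\<close>
definition cmp_vertices :: "nat list \<Rightarrow> (nat \<times> nat) set" where
  "cmp_vertices ns = {(i, j). i < length ns \<and> j < ns ! i}"

definition cmp_adj :: "nat \<times> nat \<Rightarrow> nat \<times> nat \<Rightarrow> bool" where
  "cmp_adj x y \<longleftrightarrow> fst x \<noteq> fst y"

end

theory Submission imports Defs begin


definition cnt :: "(nat \<times> nat) set \<Rightarrow> nat \<Rightarrow> nat" where
  "cnt S i = card {u\<in>S. fst u = i}"

lemma cnt3:
  assumes "finite S" "i \<noteq> j" "i \<noteq> k" "j \<noteq> k"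
  shows "cnt S i + cnt S j + cnt S k \<le> card S"
proof -
  let ?A = "{u\<in>S. fst u = i}" and ?B = "{u\<in>S. fst u = j}" and ?C = "{u\<in>S. fst u = k}"
  have "card (?A \<union> ?B \<union> ?C) = card ?A + card ?B + card ?C"
    using assms by (subst card_Un_disjoint, simp, simp, blast, subst card_Un_disjoint, auto)
  moreover have "card (?A \<union> ?B \<union> ?C) \<le> card S" using assms(1) by (intro card_mono) auto
  ultimately show ?thesis unfolding cnt_def by linarith
qed

lemma cnt_le: "finite S \<Longrightarrow> cnt S i \<le> card S"
  unfolding cnt_def by (intro card_mono) auto

lemma cnt_remove:
  assumes "finite S" "v \<in> S"
  shows "cnt (S - {v}) i = (if i = fst v then cnt S i - 1 else cnt S i)"
proof -
  have "{u\<in>S - {v}. fst u = i} = {u\<in>S. fst u = i} - {v}" by auto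
  then show ?thesis unfolding cnt_def using assms by auto
qed

lemma construct:
  "finite S \<Longrightarrow> v \<in> S \<Longrightarrow> (\<forall>i. 2*cnt S i \<le> card S + 1) \<Longrightarrow>
   (\<forall>i. i \<noteq> fst v \<longrightarrow> 2*cnt S i \<le> card S) \<Longrightarrow>
   \<exists>p. distinct p \<and> set p = S \<and> p \<noteq> [] \<and> hd p = v \<and>
       (\<forall>k. Suc k < length p \<longrightarrow> fst (p!k) \<noteq> fst (p!Suc k))"
proof (induction "card S" arbitrary: S v rule: less_induct)
  case less
  note fin = less.prems(1) and vS = less.prems(2) and c1 = less.prems(3) and c2 = less.prems(4)
  show ?case
  proof (cases "S = {v}")
    case True
    then show ?thesis by (intro exI[of _ "[v]"]) auto
  next
    case False
    define S' where "S' = S - {v}"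
    have cS: "card S' = card S - 1" "card S \<ge> 2"
    proof -
      show "card S' = card S - 1" using fin vS unfolding S'_def by simp
      obtain u where "u \<in> S" "u \<noteq> v" using False vS by blast
      then have "{u, v} \<subseteq> S" using vS by auto
      from card_mono[OF fin this] show "card S \<ge> 2" using \<open>u \<noteq> v\<close> by simp
    qed
    have finS': "finite S'" using fin unfolding S'_def by auto
    define W where "W = {w\<in>S'. fst w \<noteq> fst v}"
    have "W \<noteq> {}"
    proof
      assume "W = {}"
      then have "{u\<in>S. fst u = fst v} = S" unfolding W_def S'_def by auto (metis fst_conv)
      then have "cnt S (fst v) = card S" unfolding cnt_def by simp
      then show False using c1[rule_format, of "fst v"] cS by linarith
    qed
    define g where "g w = cnt S' (fst w)" for w :: "nat \<times> nat"
    have finW: "finite W" using finS' unfolding W_def by auto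
    obtain w where wW: "w \<in> W" and wmax: "g w = Max (g ` W)"
    proof -
      have "Max (g ` W) \<in> g ` W" using Max_in[of "g ` W"] finW \<open>W \<noteq> {}\<close> by auto
      then show ?thesis using that by (metis imageE)
    qed
    have gmax: "g u \<le> g w" if "u \<in> W" for u using wmax finW that by simp
    have wS': "w \<in> S'" and wv: "fst w \<noteq> fst v" using wW unfolding W_def by auto
    have cntS': "cnt S' i = (if i = fst v then cnt S i - 1 else cnt S i)" for i
      unfolding S'_def using cnt_remove fin vS by blast
    have cv1: "cnt S (fst v) \<ge> 1"
    proof -
      have "v \<in> {u\<in>S. fst u = fst v}" using vS by simp
      moreover have "finite {u\<in>S. fst u = fst v}" using fin by simp
      ultimately show ?thesis unfolding cnt_def by (metis One_nat_def Suc_leI card_gt_0_iff empty_iff)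
    qed
    have h1: "\<forall>i. 2*cnt S' i \<le> card S' + 1"
    proof
      fix i show "2*cnt S' i \<le> card S' + 1"
        using c1[rule_format, of i] c2[rule_format, of i] cS cntS'[of i] by auto
    qed
    have h2: "\<forall>i. i \<noteq> fst w \<longrightarrow> 2*cnt S' i \<le> card S'"
    proof (intro allI impI)
      fix i assume iw: "i \<noteq> fst w"
      show "2*cnt S' i \<le> card S'"
      proof (cases "i = fst v")
        case True
        then show ?thesis using c1[rule_format, of i] cS cntS'[of i] cv1 by auto
      next
        case iv: False
        have "2*cnt S i \<noteq> card S"
        proof
          assume eq: "2*cnt S i = card S"
          then have "cnt S i \<noteq> 0" using cS by auto
          then obtain u where "u \<in> S" "fst u = i" unfolding cnt_def
            by (metis (mono_tags, lifting) card.empty empty_Collect_eq)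
          then have "u \<in> W" using iv unfolding W_def S'_def by auto
          then have "g u \<le> g w" by (rule gmax)
          then have "cnt S i \<le> cnt S (fst w)" unfolding g_def using cntS' iv wv \<open>fst u = i\<close> by auto
          moreover have "cnt S i + cnt S (fst w) + cnt S (fst v) \<le> card S"
            using cnt3[OF fin] iv iw wv by metis
          ultimately show False using eq cv1 by linarith
        qed
        then show ?thesis using c2[rule_format, of i] iv cS cntS'[of i] by auto
      qed
    qed
    have "card S' < card S" using cS by linarith
    from less.hyps[OF this finS' wS' h1 h2] obtain p' where
      p': "distinct p'" "set p' = S'" "p' \<noteq> []" "hd p' = w"
          "\<forall>k. Suc k < length p' \<longrightarrow> fst (p'!k) \<noteq> fst (p'!Suc k)" by blast
    have adj: "\<forall>k. Suc k < length (v#p') \<longrightarrow> fst ((v#p')!k) \<noteq> fst ((v#p')!Suc k)"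
    proof (intro allI impI)
      fix k assume "Suc k < length (v#p')"
      then show "fst ((v#p')!k) \<noteq> fst ((v#p')!Suc k)"
        using p' wv by (cases k) (auto simp: hd_conv_nth)
    qed
    show ?thesis
      using p' adj vS unfolding S'_def by (intro exI[of _ "v#p'"]) auto
  qed
qed


lemma filt:
  "(\<forall>k. Suc k < length xs \<longrightarrow> \<not>(P (xs!k) \<and> P (xs!Suc k))) \<Longrightarrow>
   length (filter P xs) \<le> length (filter (\<lambda>x. \<not>P x) xs) + (if xs \<noteq> [] \<and> P (hd xs) then 1 else 0)"
proof (induction xs)
  case Nil then show ?case by simp
next
  case (Cons x ys)
  have h: "\<forall>k. Suc k < length ys \<longrightarrow> \<not>(P (ys!k) \<and> P (ys!Suc k))"
  proof (intro allI impI)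
    fix k assume "Suc k < length ys"
    then show "\<not>(P (ys!k) \<and> P (ys!Suc k))" using Cons.prems[rule_format, of "Suc k"] by simp
  qed
  have h0: "ys \<noteq> [] \<Longrightarrow> \<not>(P x \<and> P (hd ys))"
    using Cons.prems[rule_format, of 0] by (simp add: hd_conv_nth)
  show ?case using Cons.IH[OF h] h0 by (cases "ys = []") (auto split: if_splits)
qed

lemma path_rev: "is_path V cmp_adj p \<Longrightarrow> is_path V cmp_adj (rev p)"
  unfolding is_path_def
proof (intro conjI allI impI; (elim conjE)?)
  fix i assume p: "\<forall>i. Suc i < length p \<longrightarrow> cmp_adj (p ! i) (p ! Suc i)" and i: "Suc i < length (rev p)"
  define j where "j = length p - Suc (Suc i)"
  have "cmp_adj (p ! j) (p ! Suc j)" using p i unfolding j_def by auto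
  moreover have "rev p ! i = p ! Suc j" "rev p ! Suc i = p ! j" using i unfolding j_def
    by (auto simp: rev_nth Suc_diff_Suc)
  ultimately show "cmp_adj (rev p ! i) (rev p ! Suc i)" unfolding cmp_adj_def by auto
qed auto

lemma path_len: "finite V \<Longrightarrow> is_path V E p \<Longrightarrow> length p \<le> card V"
  unfolding is_path_def by (metis card_mono distinct_card)

lemma path_bound:
  assumes fin: "finite V" and p: "is_path V cmp_adj p"
  shows "length p \<le> 2 * card (V - {u\<in>V. fst u = i0}) + (if fst (hd p) = i0 then 1 else 0)"
proof -
  let ?P = "\<lambda>u::nat\<times>nat. fst u = i0"
  have adj: "\<forall>k. Suc k < length p \<longrightarrow> \<not>(?P (p!k) \<and> ?P (p!Suc k))"
    using p unfolding is_path_def cmp_adj_def by auto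
  have ne: "p \<noteq> []" using p unfolding is_path_def by auto
  have f: "length (filter ?P p) \<le> length (filter (\<lambda>x. \<not>?P x) p) + (if fst (hd p) = i0 then 1 else 0)"
    using filt[OF adj] ne by simp
  have "length (filter (\<lambda>x. \<not>?P x) p) = card (set (filter (\<lambda>x. \<not>?P x) p))"
    using p unfolding is_path_def by (metis distinct_card distinct_filter)
  also have "\<dots> \<le> card (V - {u\<in>V. fst u = i0})"
    using p fin unfolding is_path_def by (intro card_mono) auto
  finally have "length (filter (\<lambda>x. \<not>?P x) p) \<le> card (V - {u\<in>V. fst u = i0})" .
  moreover have "length (filter ?P p) + length (filter (\<lambda>x. \<not>?P x) p) = length p"
    by (rule sum_length_filter_compl)
  ultimately show ?thesis using f by linarith
qed

lemma detour_eqI: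
  assumes "v \<in> V" and ex: "\<exists>p. is_path V cmp_adj p \<and> hd p = v \<and> length p = t"
    and ub: "\<And>p. is_path V cmp_adj p \<Longrightarrow> hd p = v \<Longrightarrow> length p \<le> t"
  shows "detour V cmp_adj v = t"
  unfolding detour_def
proof (rule Max_eqI)
  have ub2: "length p \<le> t" if "is_path V cmp_adj p" "hd p = v \<or> last p = v" for p
    using that
  proof (elim disjE)
    assume "is_path V cmp_adj p" "last p = v"
    then have "is_path V cmp_adj (rev p)" "hd (rev p) = v" using path_rev
      by (auto simp: hd_rev)
    then show ?thesis using ub by fastforce
  qed (auto intro: ub)
  show "finite {length p |p. is_path V cmp_adj p \<and> (hd p = v \<or> last p = v)}"
    by (rule finite_subset[of _ "{..t}"]) (auto dest: ub2)
  show "y \<le> t" if "y \<in> {length p |p. is_path V cmp_adj p \<and> (hd p = v \<or> last p = v)}" for y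
    using that ub2 by auto
  show "t \<in> {length p |p. is_path V cmp_adj p \<and> (hd p = v \<or> last p = v)}"
    using ex by auto
qed

lemma construct_path:
  assumes "finite S" "S \<subseteq> V" "v \<in> S" "\<forall>i. 2*cnt S i \<le> card S + 1"
   "\<forall>i. i \<noteq> fst v \<longrightarrow> 2*cnt S i \<le> card S"
  shows "\<exists>p. is_path V cmp_adj p \<and> hd p = v \<and> length p = card S"
proof -
  obtain p where "distinct p" "set p = S" "p \<noteq> []" "hd p = v"
     "\<forall>k. Suc k < length p \<longrightarrow> fst (p!k) \<noteq> fst (p!Suc k)"
    using construct[OF assms(1,3,4,5)] by blast
  then show ?thesis using assms(2) unfolding is_path_def cmp_adj_def
    by (intro exI[of _ p]) (auto simp: distinct_card)
qed


lemma caseA: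
  assumes fin: "finite V" and c: "\<forall>i. 2*cnt V i \<le> card V"
  shows "detour_seq V cmp_adj = replicate (card V) (card V)"
proof -
  have d: "detour V cmp_adj v = card V" if "v \<in> V" for v
  proof (rule detour_eqI[OF that])
    show "\<exists>p. is_path V cmp_adj p \<and> hd p = v \<and> length p = card V"
      using c by (intro construct_path[OF fin _ that]) (auto intro: le_SucI)
    show "length p \<le> card V" if "is_path V cmp_adj p" for p
      using path_len[OF fin that] .
  qed
  have "image_mset (detour V cmp_adj) (mset_set V) = image_mset (\<lambda>_. card V) (mset_set V)"
    using d fin by (intro image_mset_cong) auto
  also have "\<dots> = mset (replicate (card V) (card V))"
    by (simp add: image_mset_const_eq)
  finally show ?thesis unfolding detour_seq_def
    by (metis sorted_list_of_multiset_mset sorted_replicate sorted_sort_id)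
qed

lemma caseB:
  assumes fin: "finite V" and c: "card V < 2*cnt V i0"
  defines "b \<equiv> card V - cnt V i0"
  shows "detour_seq V cmp_adj = replicate b (2*b) @ replicate (cnt V i0) (2*b+1)"
proof -
  define Pt where "Pt = {u\<in>V. fst u = i0}"
  define R where "R = V - Pt"
  have finPt: "finite Pt" "finite R" using fin unfolding Pt_def R_def by auto
  have cPt: "card Pt = cnt V i0" unfolding Pt_def cnt_def by simp
  have cR: "card R = b" unfolding R_def b_def using cPt fin
    by (simp add: card_Diff_subset Pt_def)
  have ab: "b < cnt V i0" using c cnt_le[OF fin, of i0] unfolding b_def by linarith
  have VPR: "V = Pt \<union> R" "Pt \<inter> R = {}" unfolding R_def Pt_def by auto
  have cntR: "cnt S i \<le> b" if "i \<noteq> i0" "S \<subseteq> Pt \<union> R" "finite S" for S i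
  proof -
    have "{u\<in>S. fst u = i} \<subseteq> R" using that unfolding Pt_def by auto
    then show ?thesis unfolding cnt_def using card_mono[OF finPt(2)] cR by fastforce
  qed
  have ub: "length p \<le> 2 * b + (if fst (hd p) = i0 then 1 else 0)" if "is_path V cmp_adj p" for p
    using path_bound[OF fin that, of i0] cR unfolding R_def Pt_def by simp
  have d1: "detour V cmp_adj v = 2*b+1" if "v \<in> Pt" for v
  proof (rule detour_eqI)
    show vV: "v \<in> V" using that unfolding Pt_def by auto
    have "b \<le> card (Pt - {v})" using ab cPt that finPt by auto
    then obtain A where A: "A \<subseteq> Pt - {v}" "card A = b" "finite A"
      by (rule obtain_subset_with_card_n)
    define S where "S = insert v A \<union> R"
    have finS: "finite S" unfolding S_def using A finPt by auto
    have "v \<notin> A" using A by auto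
    have cS: "card S = 2*b+1" unfolding S_def using A finPt cR VPR that \<open>v \<notin> A\<close>
      by (subst card_Un_disjoint) auto
    have S0: "{u\<in>S. fst u = i0} = insert v A" unfolding S_def R_def using A that
      unfolding Pt_def by auto
    have "cnt S i0 = b + 1" unfolding cnt_def S0 using A \<open>v \<notin> A\<close> by auto
    moreover have "cnt S i \<le> b" if "i \<noteq> i0" for i
      using cntR[OF that _ finS] A \<open>v \<in> Pt\<close> unfolding S_def by auto
    ultimately have h: "\<forall>i. 2*cnt S i \<le> card S + 1" "\<forall>i. i \<noteq> fst v \<longrightarrow> 2*cnt S i \<le> card S"
    proof -
      assume a1: "cnt S i0 = b + 1" and a2: "\<And>i. i \<noteq> i0 \<Longrightarrow> cnt S i \<le> b"
      show "\<forall>i. 2*cnt S i \<le> card S + 1"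
      proof
        fix i show "2*cnt S i \<le> card S + 1"
          using a1 a2[of i] cS by (cases "i = i0") auto
      qed
      show "\<forall>i. i \<noteq> fst v \<longrightarrow> 2*cnt S i \<le> card S"
      proof (intro allI impI)
        fix i assume "i \<noteq> fst v"
        then have "i \<noteq> i0" using \<open>v \<in> Pt\<close> unfolding Pt_def by auto
        then show "2*cnt S i \<le> card S" using a2[of i] cS by auto
      qed
    qed
    have "S \<subseteq> V" unfolding S_def using A VPR that by auto
    from construct_path[OF finS this _ h] cS
    show "\<exists>p. is_path V cmp_adj p \<and> hd p = v \<and> length p = 2*b+1"
      unfolding S_def by auto
    show "length p \<le> 2*b+1" if "is_path V cmp_adj p" for p
      using ub[OF that] by (simp split: if_splits)
  qed
  have d2: "detour V cmp_adj v = 2*b" if "v \<in> R" for v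
  proof (rule detour_eqI)
    show vV: "v \<in> V" using that unfolding R_def by auto
    have fv: "fst v \<noteq> i0" using that unfolding R_def Pt_def by auto
    have "b \<le> card Pt" using ab cPt by auto
    then obtain A where A: "A \<subseteq> Pt" "card A = b" "finite A"
      by (rule obtain_subset_with_card_n)
    define S where "S = A \<union> R"
    have finS: "finite S" unfolding S_def using A finPt by auto
    have cS: "card S = 2*b" unfolding S_def using A finPt cR VPR
      by (subst card_Un_disjoint) auto
    have S0: "{u\<in>S. fst u = i0} = A" unfolding S_def R_def using A
      unfolding Pt_def by auto
    have "cnt S i0 = b" unfolding cnt_def S0 using A by auto
    moreover have "cnt S i \<le> b" if "i \<noteq> i0" for i
      using cntR[OF that _ finS] A unfolding S_def by auto
    ultimately have h: "\<forall>i. 2*cnt S i \<le> card S + 1" "\<forall>i. i \<noteq> fst v \<longrightarrow> 2*cnt S i \<le> card S"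
    proof -
      assume a1: "cnt S i0 = b" and a2: "\<And>i. i \<noteq> i0 \<Longrightarrow> cnt S i \<le> b"
      have "2*cnt S i \<le> card S" for i
          using a1 a2[of i] cS by (cases "i = i0") auto
      then show "\<forall>i. 2*cnt S i \<le> card S + 1" "\<forall>i. i \<noteq> fst v \<longrightarrow> 2*cnt S i \<le> card S"
        by (auto intro: le_SucI)
    qed
    have "S \<subseteq> V" unfolding S_def using A VPR by auto
    from construct_path[OF finS this _ h] cS
    show "\<exists>p. is_path V cmp_adj p \<and> hd p = v \<and> length p = 2*b"
      unfolding S_def using that by auto
    show "length p \<le> 2*b" if "is_path V cmp_adj p" "hd p = v" for p
      using ub[OF that(1)] that(2) fv by simp
  qed
  have "image_mset (detour V cmp_adj) (mset_set V) =
        image_mset (detour V cmp_adj) (mset_set Pt) + image_mset (detour V cmp_adj) (mset_set R)"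
    using VPR finPt by (simp add: mset_set_Union)
  also have "\<dots> = image_mset (\<lambda>_. 2*b+1) (mset_set Pt) + image_mset (\<lambda>_. 2*b) (mset_set R)"
    using d1 d2 finPt by (intro arg_cong2[where f="(+)"] image_mset_cong) auto
  also have "\<dots> = mset (replicate b (2*b) @ replicate (cnt V i0) (2*b+1))"
    using cPt cR by (simp add: image_mset_const_eq)
  finally have "detour_seq V cmp_adj = sort (replicate b (2*b) @ replicate (cnt V i0) (2*b+1))"
    unfolding detour_seq_def by (simp only: sorted_list_of_multiset_mset)
  also have "\<dots> = replicate b (2*b) @ replicate (cnt V i0) (2*b+1)"
    by (rule sorted_sort_id) (auto simp: sorted_append)
  finally show ?thesis .
qed


lemma fin_cmp: "finite (cmp_vertices ns)"
proof -
  have "cmp_vertices ns = Sigma {..<length ns} (\<lambda>i. {..<ns!i})" unfolding cmp_vertices_def by auto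
  then show ?thesis by simp
qed

lemma conn_lemma:
  assumes "V \<noteq> {}" "\<forall>x\<in>V. \<exists>w\<in>V. fst w \<noteq> fst x"
  shows "connected_graph V cmp_adj"
  unfolding connected_graph_def
proof (intro conjI ballI)
  show "V \<noteq> {}" by fact
  fix u v assume u: "u \<in> V" and v: "v \<in> V"
  show "\<exists>p. is_path V cmp_adj p \<and> hd p = u \<and> last p = v"
  proof (cases "u = v")
    case True
    then show ?thesis using u by (intro exI[of _ "[u]"]) (auto simp: is_path_def)
  next
    case uv: False
    show ?thesis
    proof (cases "fst u = fst v")
      case False
      then show ?thesis using u v uv
        by (intro exI[of _ "[u,v]"]) (auto simp: is_path_def cmp_adj_def less_Suc_eq)
    next
      case True
      obtain w where w: "w \<in> V" "fst w \<noteq> fst u" using assms(2) u by blast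
      have "w \<noteq> u" "w \<noteq> v" using w True by auto
      then show ?thesis using u v uv w True
        by (intro exI[of _ "[u,w,v]"]) (auto simp: is_path_def cmp_adj_def less_Suc_eq nth_Cons split: nat.splits)
    qed
  qed
qed

lemma single_part:
  assumes fin: "finite V" and conn: "connected_graph V cmp_adj" and c: "cnt V i0 = card V"
  shows "card V = 1"
proof (rule ccontr)
  assume ne: "card V \<noteq> 1"
  have "V \<noteq> {}" using conn unfolding connected_graph_def by auto
  then have "card V \<noteq> 0" using fin by simp
  then have "card V \<ge> 2" using ne by linarith
  then obtain u v where uv: "u \<in> V" "v \<in> V" "u \<noteq> v"
    by (metis One_nat_def card_le_Suc0_iff_eq not_less_eq_eq numeral_2_eq_2 fin)
  have sub: "{u\<in>V. fst u = i0} = V"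
    using c fin unfolding cnt_def by (metis (no_types, lifting) card_subset_eq mem_Collect_eq subsetI)
  obtain p where p: "is_path V cmp_adj p" "hd p = u" "last p = v"
    using conn uv unfolding connected_graph_def by blast
  have "length p \<noteq> 1"
  proof
    assume "length p = 1"
    then obtain x where "p = [x]" by (metis One_nat_def length_0_conv length_Suc_conv)
    then show False using p uv by auto
  qed
  moreover have "p \<noteq> []" using p unfolding is_path_def by auto
  ultimately have l: "Suc 0 < length p" by (cases p) auto
  then have "cmp_adj (p!0) (p!1)" using p unfolding is_path_def by auto
  moreover have "p!0 \<in> V" "p!1 \<in> V" using p l unfolding is_path_def by (auto simp: nth_mem subsetD)
  ultimately show False using sub unfolding cmp_adj_def by (metis (mono_tags, lifting) mem_Collect_eq)
qed

theorem corollary1p24: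
  fixes s :: "nat list"
  shows "(\<exists>ns. length ns \<ge> 2 \<and> connected_graph (cmp_vertices ns) cmp_adj \<and>
             s = detour_seq (cmp_vertices ns) cmp_adj)
     \<longleftrightarrow> ((\<exists>N. N \<ge> 1 \<and> s = replicate N N) \<or>
          (\<exists>n m. 0 < n \<and> n < m \<and> s = replicate n (2 * n) @ replicate m (2 * n + 1)))"
proof
  assume "\<exists>ns. length ns \<ge> 2 \<and> connected_graph (cmp_vertices ns) cmp_adj \<and>
             s = detour_seq (cmp_vertices ns) cmp_adj"
  then obtain ns where conn: "connected_graph (cmp_vertices ns) cmp_adj"
    and s: "s = detour_seq (cmp_vertices ns) cmp_adj" by blast
  define V where "V = cmp_vertices ns"
  have fin: "finite V" unfolding V_def by (rule fin_cmp)
  have ne: "V \<noteq> {}" using conn unfolding connected_graph_def V_def by auto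
  show "(\<exists>N. N \<ge> 1 \<and> s = replicate N N) \<or>
          (\<exists>n m. 0 < n \<and> n < m \<and> s = replicate n (2 * n) @ replicate m (2 * n + 1))"
  proof (cases "\<forall>i. 2*cnt V i \<le> card V")
    case True
    then have "s = replicate (card V) (card V)" using caseA[OF fin] s unfolding V_def by simp
    moreover have "card V \<ge> 1" using fin ne by (simp add: Suc_leI card_gt_0_iff)
    ultimately show ?thesis by blast
  next
    case False
    then obtain i0 where c: "card V < 2*cnt V i0" by (meson not_le)
    define b where "b = card V - cnt V i0"
    have s2: "s = replicate b (2*b) @ replicate (cnt V i0) (2*b+1)"
      using caseB[OF fin c] s unfolding V_def b_def by simp
    have le: "cnt V i0 \<le> card V" by (rule cnt_le[OF fin])
    show ?thesis
    proof (cases "b = 0")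
      case True
      then have "cnt V i0 = card V" using le unfolding b_def by simp
      then have "card V = 1" using single_part[OF fin conn[folded V_def]] by simp
      then have "s = replicate 1 1" using s2 True \<open>cnt V i0 = card V\<close> by simp
      then show ?thesis by blast
    next
      case False
      then have "0 < b" "b < cnt V i0" using c le unfolding b_def by auto
      then show ?thesis using s2 by blast
    qed
  qed
next
  assume "(\<exists>N. N \<ge> 1 \<and> s = replicate N N) \<or>
          (\<exists>n m. 0 < n \<and> n < m \<and> s = replicate n (2 * n) @ replicate m (2 * n + 1))"
  then show "\<exists>ns. length ns \<ge> 2 \<and> connected_graph (cmp_vertices ns) cmp_adj \<and>
             s = detour_seq (cmp_vertices ns) cmp_adj"
  proof
    assume "\<exists>N. N \<ge> 1 \<and> s = replicate N N"
    then obtain N where N: "N \<ge> 1" "s = replicate N N" by blast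
    define ns where "ns = replicate N (1::nat) @ [0]"
    have V: "cmp_vertices ns = (\<lambda>i. (i, 0::nat)) ` {..<N}"
      unfolding cmp_vertices_def ns_def by (auto simp: nth_append image_iff split: if_splits)
    have cV: "card (cmp_vertices ns) = N" unfolding V by (subst card_image) (auto simp: inj_on_def)
    have cnt1: "cnt (cmp_vertices ns) i \<le> 1" for i
    proof -
      have "{u\<in>cmp_vertices ns. fst u = i} \<subseteq> {(i,0)}" unfolding V by auto
      from card_mono[OF _ this] show ?thesis unfolding cnt_def by simp
    qed
    have len: "length ns \<ge> 2" unfolding ns_def using N by simp
    show ?thesis
    proof (cases "N = 1")
      case True
      have V1: "cmp_vertices ns = {(0,0)}" unfolding V True by auto
      have conn: "connected_graph (cmp_vertices ns) cmp_adj"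
        unfolding V1 connected_graph_def by (intro conjI ballI exI[of _ "[(0,0)]"]) (auto simp: is_path_def)
      have "{u\<in>cmp_vertices ns. fst u = 0} = {(0,0)}" unfolding V1 by auto
      then have "cnt (cmp_vertices ns) 0 = 1" unfolding cnt_def by simp
      then have "detour_seq (cmp_vertices ns) cmp_adj = replicate 0 0 @ replicate 1 1"
        using caseB[OF fin_cmp, of ns 0] cV True by simp
      then show ?thesis using len conn N True by (intro exI[of _ ns]) simp
    next
      case False
      then have N2: "N \<ge> 2" using N by simp
      have conn: "connected_graph (cmp_vertices ns) cmp_adj"
      proof (rule conn_lemma)
        show "cmp_vertices ns \<noteq> {}" unfolding V using N by (auto simp: lessThan_empty_iff)
        show "\<forall>x\<in>cmp_vertices ns. \<exists>w\<in>cmp_vertices ns. fst w \<noteq> fst x"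
        proof
          fix x assume "x \<in> cmp_vertices ns"
          show "\<exists>w\<in>cmp_vertices ns. fst w \<noteq> fst x"
          proof (cases "fst x = 0")
            case True then show ?thesis using N2 unfolding V by (intro bexI[of _ "(1,0)"]) auto
          next
            case False then show ?thesis using N2 unfolding V by (intro bexI[of _ "(0,0)"]) auto
          qed
        qed
      qed
      have "\<forall>i. 2*cnt (cmp_vertices ns) i \<le> card (cmp_vertices ns)"
        using cnt1 cV N2 by (metis le_trans mult_le_mono2 mult_1_right)
      then have "detour_seq (cmp_vertices ns) cmp_adj = replicate N N"
        using caseA[OF fin_cmp] cV by simp
      then show ?thesis using len conn N by (intro exI[of _ ns]) simp
    qed
  next
    assume "\<exists>n m. 0 < n \<and> n < m \<and> s = replicate n (2 * n) @ replicate m (2 * n + 1)"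
    then obtain n m where nm: "0 < n" "n < m" "s = replicate n (2 * n) @ replicate m (2 * n + 1)"
      by blast
    define ns where "ns = [m, n]"
    define A0 where "A0 = (\<lambda>j. (0::nat, j)) ` {..<m}"
    define A1 where "A1 = (\<lambda>j. (1::nat, j)) ` {..<n}"
    have V: "cmp_vertices ns = A0 \<union> A1"
      unfolding cmp_vertices_def ns_def A0_def A1_def by (auto simp: less_Suc_eq image_iff)
    have cA: "card A0 = m" "card A1 = n" unfolding A0_def A1_def
      by (subst card_image, auto simp: inj_on_def)+
    have cV: "card (cmp_vertices ns) = m + n" unfolding V using cA
      by (subst card_Un_disjoint) (auto simp: A0_def A1_def)
    have "{u\<in>cmp_vertices ns. fst u = 0} = A0" unfolding V A0_def A1_def by auto
    then have c0: "cnt (cmp_vertices ns) 0 = m" unfolding cnt_def using cA by simp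
    have conn: "connected_graph (cmp_vertices ns) cmp_adj"
    proof (rule conn_lemma)
      show "cmp_vertices ns \<noteq> {}" unfolding V A0_def using nm by auto
      show "\<forall>x\<in>cmp_vertices ns. \<exists>w\<in>cmp_vertices ns. fst w \<noteq> fst x"
      proof
        fix x assume x: "x \<in> cmp_vertices ns"
        show "\<exists>w\<in>cmp_vertices ns. fst w \<noteq> fst x"
        proof (cases "fst x = 0")
          case True then show ?thesis using nm unfolding V A0_def A1_def by (intro bexI[of _ "(1,0)"]) auto
        next
          case False then show ?thesis using nm unfolding V A0_def A1_def by (intro bexI[of _ "(0,0)"]) auto
        qed
      qed
    qed
    have "card (cmp_vertices ns) < 2 * cnt (cmp_vertices ns) 0" using cV c0 nm by simp
    from caseB[OF fin_cmp this]
    have "detour_seq (cmp_vertices ns) cmp_adj = replicate n (2*n) @ replicate m (2*n+1)"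
      using cV c0 by simp
    then show ?thesis using nm conn by (intro exI[of _ ns]) (simp add: ns_def)
  qed
qed

end
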